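(* Let $d\geq2$ and let $f\in\operatorname{BV}(\mathbb{R}^d)$ have bounded support. For $s>0$ let $G^s=\{f>s\}$ and for $s<0$ let $G^s=\{f<s\}$. Assume that the level sets $G^s$ satisfy uniform density estimates at some scale $r_0>0$ and constant $C\in(0,1)$ independent of $s$, i.e. for every $s$ and every $x\in\partial G^s$, $$\frac{|G^s\cap B(x,r)|}{|B(x,r)|}\geq C\ \text{ for }0<r<r_0,\qquad\frac{|B(x,r)\setminus G^s|}{|B(x,r)|}\geq C\ \text{ for }0<r\leq r_0.$$ Then for a.e. $s$, $$\lim_{\nu\to0}d_H(G^s,G^{s+\nu})=0\quad\text{and}\quad\lim_{\nu\to0}d_H(\mathbb{R}^d\setminus G^s,\mathbb{R}^d\setminus G^{s+\nu})=0.$$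
   Context: Convention: each measurable set $E$ is identified with its representative whose topological boundary is $\partial E=\{x:0<|E\cap B(x,r)|/|B(x,r)|<1\ \forall r>0\}$. $d_H(E,F)=\max\{\sup_{x\in E}\operatorname{dist}(x,F),\sup_{y\in F}\operatorname{dist}(y,E)\}$ is the Hausdorff distance. *)

theory Defs
  imports "HOL-Analysis.Analysis"
begin

definition divergence :: "('a::euclidean_space \<Rightarrow> 'a) \<Rightarrow> 'a \<Rightarrow> real" where
  "divergence \<phi> x = (\<Sum>b\<in>Basis. (frechet_derivative \<phi> (at x) b) \<bullet> b)"

definition BV_test_field :: "('a::euclidean_space \<Rightarrow> 'a) \<Rightarrow> bool" where
  "BV_test_field \<phi> \<longleftrightarrow>
     (\<forall>x. \<phi> differentiable (at x)) \<and>
     (\<forall>b\<in>Basis. continuous_on UNIV (\<lambda>x. frechet_derivative \<phi> (at x) b)) \<and>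
     bounded {x. \<phi> x \<noteq> 0} \<and>
     (\<forall>x. norm (\<phi> x) \<le> 1)"

definition BV :: "('a::euclidean_space \<Rightarrow> real) \<Rightarrow> bool" where
  "BV f \<longleftrightarrow> integrable lebesgue f \<and>
     (\<exists>M. \<forall>\<phi>. BV_test_field \<phi> \<longrightarrow>
        (\<integral>x. f x * divergence \<phi> x \<partial>lebesgue) \<le> M)"

text \<open>Normalized representative of a measurable set E (Maggi, Prop. 12.19):
  add points where E has full measure in a ball, remove points where it has null measure in a ball.
  Its topological boundary is {x. 0 < |E \<inter> B(x,r)| < |B(x,r)| for all r > 0}.\<close>
definition normalized_rep :: "'a::euclidean_space set \<Rightarrow> 'a set" where
  "normalized_rep E =
     (E \<union> {x. \<exists>r>0. measure lebesgue (ball x r - E) = 0})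
       - {x. \<exists>r>0. measure lebesgue (E \<inter> ball x r) = 0}"

definition level_set :: "('a::euclidean_space \<Rightarrow> real) \<Rightarrow> real \<Rightarrow> 'a set" where
  "level_set f s = normalized_rep (if s > 0 then {x. f x > s} else {x. f x < s})"

text \<open>Extended-real distance from a point to a set (\<infinity> for the empty set) and
  Hausdorff distance (valued in [0,\<infinity>], with d_H of two empty sets being 0).\<close>
definition edist_set :: "'a::metric_space \<Rightarrow> 'a set \<Rightarrow> ereal" where
  "edist_set x F = (INF y\<in>F. ereal (dist x y))"

definition hausdorff_dist :: "'a::metric_space set \<Rightarrow> 'a set \<Rightarrow> ereal" where
  "hausdorff_dist E F = Sup ({0} \<union> (\<lambda>x. edist_set x F) ` E \<union> (\<lambda>y. edist_set y E) ` F)"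

end

theory Submission
  imports Defs
begin



lemma bounded_null:
  fixes A :: "'a::euclidean_space set"
  assumes "A \<in> sets lebesgue" "bounded A" "measure lebesgue A = 0"
  shows "A \<in> null_sets lebesgue"
proof -
  have "A \<in> fmeasurable lebesgue" using assms bounded_set_imp_lmeasurable by blast
  then have "emeasure lebesgue A = ennreal (measure lebesgue A)"
    by (simp add: fmeasurableD2 emeasure_eq_measure2)
  then show ?thesis using assms by auto
qed

lemma ball_lebesgue_eq:
  fixes y :: "'a::euclidean_space"
  assumes "r \<ge> 0"
  shows "measure lebesgue (ball y r) = measure lebesgue (ball (0::'a) r)"
  using content_ball_conv_unit_ball[OF assms, of y] content_ball_conv_unit_ball[OF assms, of "0::'a"]
  by simp

lemma ball_in_ball:
  fixes x y :: "'a::metric_space"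
  assumes "y \<in> ball x r"
  shows "r - dist x y > 0" "ball y (r - dist x y) \<subseteq> ball x r"
proof -
  show "r - dist x y > 0" using assms by simp
  show "ball y (r - dist x y) \<subseteq> ball x r"
  proof
    fix z assume "z \<in> ball y (r - dist x y)"
    then have "dist y z < r - dist x y" by simp
    then show "z \<in> ball x r" using dist_triangle[of x z y] by simp
  qed
qed

lemma union_balls_eq:
  fixes P :: "'a::metric_space \<Rightarrow> real \<Rightarrow> bool"
  assumes mono: "\<And>x r y r'. P x r \<Longrightarrow> r > 0 \<Longrightarrow> r' > 0 \<Longrightarrow> ball y r' \<subseteq> ball x r \<Longrightarrow> P y r'"
  shows "\<Union>{ball x r | x r. r > 0 \<and> P x r} = {x. \<exists>r>0. P x r}"
proof (intro equalityI subsetI)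
  fix y assume "y \<in> \<Union>{ball x r | x r. r > 0 \<and> P x r}"
  then obtain x r where xr: "y \<in> ball x r" "r > 0" "P x r" by blast
  have "P y (r - dist x y)" using mono[OF xr(3) xr(2) ball_in_ball[OF xr(1)]] .
  then show "y \<in> {x. \<exists>r>0. P x r}" using ball_in_ball(1)[OF xr(1)] by blast
next
  fix y assume "y \<in> {x. \<exists>r>0. P x r}"
  then obtain r where "r > 0" "P y r" by blast
  then have "ball y r \<in> {ball x r | x r. r > 0 \<and> P x r}" by blast
  moreover have "y \<in> ball y r" using \<open>r > 0\<close> by simp
  ultimately show "y \<in> \<Union>{ball x r | x r. r > 0 \<and> P x r}" by blast
qed

lemma measure_zero_mono:
  fixes A B :: "'a::euclidean_space set"
  assumes "A \<subseteq> B" "A \<in> sets lebesgue" "B \<in> sets lebesgue" "bounded B" "measure lebesgue B = 0"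
  shows "measure lebesgue A = 0"
proof -
  have "measure lebesgue A \<le> measure lebesgue B"
    using assms by (intro measure_mono_fmeasurable) (auto intro!: bounded_set_imp_lmeasurable)
  then show ?thesis using assms(5) measure_nonneg[of lebesgue A] by linarith
qed

lemma normalized_rep_ae:
  fixes E :: "'a::euclidean_space set"
  assumes E: "E \<in> sets lebesgue"
  shows "normalized_rep E \<in> sets lebesgue"
    "(normalized_rep E - E) \<union> (E - normalized_rep E) \<in> null_sets lebesgue"
proof -
  define F1 where "F1 = {ball x r | x r. r > 0 \<and> measure lebesgue (ball x r - E) = 0}"
  define F2 where "F2 = {ball x r | x r. r > 0 \<and> measure lebesgue (E \<inter> ball x r) = 0}"
  define N1 where "N1 = {x. \<exists>r>0. measure lebesgue (ball x r - E) = 0}"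
  define N2 where "N2 = {x. \<exists>r>0. measure lebesgue (E \<inter> ball x r) = 0}"
  have U1: "\<Union>F1 = N1" unfolding F1_def N1_def
  proof (rule union_balls_eq)
    fix x r y r' assume a1: "measure lebesgue (ball x r - E) = 0" "ball y r' \<subseteq> ball (x::'a) r"
    show "measure lebesgue (ball y r' - E) = 0"
    proof (rule measure_zero_mono[of _ "ball x r - E"])
      show "ball y r' - E \<subseteq> ball x r - E" using \<open>ball y r' \<subseteq> ball x r\<close> by blast
      show "ball y r' - E \<in> sets lebesgue" using E by (metis lmeasurable_ball fmeasurableD sets.Diff)
      show "ball x r - E \<in> sets lebesgue" using E by (metis lmeasurable_ball fmeasurableD sets.Diff)
      show "bounded (ball x r - E)" by (rule bounded_subset[of "ball x r"]) auto
    qed (rule a1)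
  qed
  have U2: "\<Union>F2 = N2" unfolding F2_def N2_def
  proof (rule union_balls_eq)
    fix x r y r' assume a1: "measure lebesgue (E \<inter> ball x r) = 0" "ball y r' \<subseteq> ball (x::'a) r"
    show "measure lebesgue (E \<inter> ball y r') = 0"
    proof (rule measure_zero_mono[of _ "E \<inter> ball x r"])
      show "E \<inter> ball y r' \<subseteq> E \<inter> ball x r" using \<open>ball y r' \<subseteq> ball x r\<close> by blast
      show "E \<inter> ball y r' \<in> sets lebesgue" using E by (metis lmeasurable_ball fmeasurableD sets.Int)
      show "E \<inter> ball x r \<in> sets lebesgue" using E by (metis lmeasurable_ball fmeasurableD sets.Int)
      show "bounded (E \<inter> ball x r)" by (rule bounded_subset[of "ball x r"]) auto
    qed (rule a1)
  qed
  have o1: "open N1" unfolding U1[symmetric] F1_def by (intro open_Union) blast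
  have o2: "open N2" unfolding U2[symmetric] F2_def by (intro open_Union) blast
  have nr: "normalized_rep E = (E \<union> N1) - N2" unfolding normalized_rep_def N1_def N2_def by simp
  show nm: "normalized_rep E \<in> sets lebesgue" unfolding nr
  proof (intro sets.Diff sets.Un E)
    show "N1 \<in> sets lebesgue" using o1 by simp
    show "N2 \<in> sets lebesgue" using o2 by simp
  qed
  obtain F1' where F1': "F1' \<subseteq> F1" "countable F1'" "\<Union>F1' = \<Union>F1"
    using Lindelof[of F1] unfolding F1_def by blast
  obtain F2' where F2': "F2' \<subseteq> F2" "countable F2'" "\<Union>F2' = \<Union>F2"
    using Lindelof[of F2] unfolding F2_def by blast
  have n1: "N1 - E \<in> null_sets lebesgue"
  proof -
    have "N1 - E = (\<Union>B\<in>F1'. B - E)" using F1'(3) U1 by blast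
    moreover have "B - E \<in> null_sets lebesgue" if hB: "B \<in> F1'" for B
    proof -
      obtain x r where "B = ball x r" "measure lebesgue (ball x r - E) = 0" using hB F1'(1) unfolding F1_def by blast
      then show ?thesis using E by (intro bounded_null) auto
    qed
    ultimately show ?thesis using F1'(2) null_sets_UN'[of F1' "\<lambda>B. B - E" lebesgue] by metis
  qed
  have n2: "E \<inter> N2 \<in> null_sets lebesgue"
  proof -
    have "E \<inter> N2 = (\<Union>B\<in>F2'. E \<inter> B)" using F2'(3) U2 by blast
    moreover have "E \<inter> B \<in> null_sets lebesgue" if hB: "B \<in> F2'" for B
    proof -
      obtain x r where "B = ball x r" "measure lebesgue (E \<inter> ball x r) = 0" using hB F2'(1) unfolding F2_def by blast
      then show ?thesis using E by (intro bounded_null) auto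
    qed
    ultimately show ?thesis using F2'(2) null_sets_UN'[of F2' "\<lambda>B. E \<inter> B" lebesgue] by metis
  qed
  have "(normalized_rep E - E) \<union> (E - normalized_rep E) \<subseteq> (N1 - E) \<union> (E \<inter> N2)"
    unfolding nr by blast
  then show "(normalized_rep E - E) \<union> (E - normalized_rep E) \<in> null_sets lebesgue"
    using n1 n2 nm E by (meson null_sets.Un null_sets_subset sets.Diff sets.Un)
qed




lemma emeasure_bounded_eq:
  fixes S :: "'a::euclidean_space set"
  assumes "S \<in> sets lebesgue" "bounded S"
  shows "emeasure lebesgue S = ennreal (measure lebesgue S)"
proof -
  have "S \<in> fmeasurable lebesgue" using assms bounded_set_imp_lmeasurable by blast
  then show ?thesis by (simp add: fmeasurableD2 emeasure_eq_measure2)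
qed

lemma ball_measure_pos:
  fixes y :: "'a::euclidean_space"
  assumes "r > 0"
  shows "measure lebesgue (ball y r) > 0"
  using content_ball_pos[OF assms, of y] by simp

lemma core:
  fixes A T :: "'a::euclidean_space set"
  assumes A: "A \<in> sets lebesgue" and T: "T \<in> sets lebesgue" and r0: "r0 > 0" and C: "0 < C" "C \<le> 1"
    and dens: "\<And>y r. y \<in> frontier A \<Longrightarrow> 0 < r \<Longrightarrow> r < r0 \<Longrightarrow>
        C \<le> measure lebesgue (A \<inter> ball y r) / measure lebesgue (ball y r)"
    and d: "\<delta> > 0" and x: "x \<in> A" and sub: "ball x \<delta> \<subseteq> T"
  shows "ennreal (C * measure lebesgue (ball (0::'a) (min (\<delta>/2) (r0/2)))) \<le> emeasure lebesgue (A \<inter> T)"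
proof -
  define \<rho> where "\<rho> = min (\<delta>/2) (r0/2)"
  define V where "V = measure lebesgue (ball (0::'a) \<rho>)"
  have rho: "\<rho> > 0" "\<rho> < r0" "\<rho> \<le> \<delta>/2" using d r0 unfolding \<rho>_def by auto
  have Vpos: "V > 0" unfolding V_def using ball_measure_pos[OF rho(1)] .
  have "ennreal (C * V) \<le> emeasure lebesgue (A \<inter> T)"
  proof (cases "\<exists>y\<in>ball x (\<delta>/2). y \<in> frontier A")
    case True
    then obtain y where y: "y \<in> ball x (\<delta>/2)" "y \<in> frontier A" by blast
    have bs: "ball y \<rho> \<subseteq> ball x \<delta>"
    proof
      fix z assume "z \<in> ball y \<rho>"
      then have "dist y z < \<rho>" by simp
      moreover have "dist x y < \<delta>/2" using y by simp
      ultimately show "z \<in> ball x \<delta>" using dist_triangle[of x z y] rho by simp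
    qed
    have mb: "measure lebesgue (ball y \<rho>) = V" unfolding V_def using ball_lebesgue_eq[of \<rho> y] rho by simp
    have "C \<le> measure lebesgue (A \<inter> ball y \<rho>) / V" using dens[OF y(2) rho(1) rho(2)] mb by simp
    then have le1: "C * V \<le> measure lebesgue (A \<inter> ball y \<rho>)" using Vpos by (simp add: pos_le_divide_eq)
    have Ab: "A \<inter> ball y \<rho> \<in> sets lebesgue" using A by (metis lmeasurable_ball fmeasurableD sets.Int)
    have "emeasure lebesgue (A \<inter> ball y \<rho>) = ennreal (measure lebesgue (A \<inter> ball y \<rho>))"
      using Ab by (intro emeasure_bounded_eq) auto
    then have "ennreal (C * V) \<le> emeasure lebesgue (A \<inter> ball y \<rho>)" using le1 by simp
    also have "\<dots> \<le> emeasure lebesgue (A \<inter> T)"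
      using bs sub A T by (intro emeasure_mono) auto
    finally show ?thesis .
  next
    case False
    then have "ball x (\<delta>/2) \<inter> frontier A = {}" by blast
    moreover have "ball x (\<delta>/2) \<inter> A \<noteq> {}"
    proof -
      have "x \<in> ball x (\<delta>/2)" using d by simp
      then show ?thesis using x by blast
    qed
    ultimately have "ball x (\<delta>/2) - A = {}" using connected_Int_frontier[of "ball x (\<delta>/2)" A] by auto
    then have bs: "ball x (\<delta>/2) \<subseteq> A \<inter> T" using sub d by auto
    have "C * V \<le> V" using Vpos C by simp
    also have "V \<le> measure lebesgue (ball x (\<delta>/2))"
    proof -
      have "V \<le> measure lebesgue (ball (0::'a) (\<delta>/2))" unfolding V_def
        using rho by (intro measure_mono_fmeasurable) (auto simp: subset_ball)
      then show ?thesis using ball_lebesgue_eq[of "\<delta>/2" x] d by simp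
    qed
    finally have "ennreal (C * V) \<le> ennreal (measure lebesgue (ball x (\<delta>/2)))" by simp
    also have "\<dots> = emeasure lebesgue (ball x (\<delta>/2))" by (intro emeasure_bounded_eq[symmetric]) auto
    also have "\<dots> \<le> emeasure lebesgue (A \<inter> T)"
      using bs A T by (intro emeasure_mono) auto
    finally show ?thesis .
  qed
  then show ?thesis unfolding V_def \<rho>_def .
qed




lemma edist_le:
  fixes A B :: "'a::euclidean_space set"
  assumes A: "A \<in> sets lebesgue" and B: "B \<in> sets lebesgue" and r0: "r0 > 0" and C: "0 < C" "C \<le> 1"
    and dens: "\<And>y r. y \<in> frontier A \<Longrightarrow> 0 < r \<Longrightarrow> r < r0 \<Longrightarrow>
        C \<le> measure lebesgue (A \<inter> ball y r) / measure lebesgue (ball y r)"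
    and d: "\<delta> > 0" and x: "x \<in> A"
    and small: "emeasure lebesgue (A - B) < ennreal (C * measure lebesgue (ball (0::'a) (min (\<delta>/2) (r0/2))))"
  shows "edist_set x B \<le> ereal \<delta>"
proof (rule ccontr)
  assume "\<not> edist_set x B \<le> ereal \<delta>"
  then have lt: "ereal \<delta> < edist_set x B" by simp
  have sub: "ball x \<delta> \<subseteq> - B"
  proof
    fix z assume z: "z \<in> ball x \<delta>"
    show "z \<in> - B"
    proof
      assume "z \<in> B"
      then have "edist_set x B \<le> ereal (dist x z)" unfolding edist_set_def by (rule INF_lower)
      then have "ereal \<delta> < ereal (dist x z)" using lt by (meson less_le_trans)
      then show False using z by simp
    qed
  qed
  have "ennreal (C * measure lebesgue (ball (0::'a) (min (\<delta>/2) (r0/2)))) \<le> emeasure lebesgue (A \<inter> - B)"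
    using B Compl_in_sets_lebesgue by (intro core[OF A _ r0 C dens d x sub]) auto
  also have "A \<inter> - B = A - B" by blast
  finally show False using small by simp
qed

lemma hd_le:
  assumes "\<And>x. x \<in> E \<Longrightarrow> edist_set x F \<le> ereal \<delta>" "\<And>y. y \<in> F \<Longrightarrow> edist_set y E \<le> ereal \<delta>" "\<delta> \<ge> 0"
  shows "hausdorff_dist E F \<le> ereal \<delta>"
  unfolding hausdorff_dist_def using assms by (auto intro!: Sup_least)

lemma hd_nonneg: "0 \<le> hausdorff_dist E F"
  unfolding hausdorff_dist_def by (rule Sup_upper) simp




lemma markov_finite:
  fixes f :: "'a::euclidean_space \<Rightarrow> real"
  assumes int: "integrable lebesgue f" and a: "a > 0"
  shows "emeasure lebesgue {x. a \<le> \<bar>f x\<bar>} < \<infinity>"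
proof -
  have "integrable lebesgue (\<lambda>x. \<bar>f x\<bar>)" using int by simp
  then have "emeasure lebesgue {x \<in> space lebesgue. a \<le> \<bar>f x\<bar>} \<le> ennreal ((1/a) * (\<integral>x. \<bar>f x\<bar> \<partial>lebesgue))"
    using a by (intro integral_Markov_inequality) auto
  then show ?thesis by (simp add: le_less_trans)
qed

lemma symdiff_small:
  fixes f :: "'a::euclidean_space \<Rightarrow> real" and c :: ennreal
  assumes int: "integrable lebesgue f" and s: "s \<noteq> 0" and z: "emeasure lebesgue {x. f x = s} = 0" and c: "c > 0"
  defines "E \<equiv> \<lambda>t. (if t > 0 then {x. f x > t} else {x. f x < t})"
  shows "\<exists>\<eta>>0. \<forall>\<nu>. \<bar>\<nu>\<bar> < \<eta> \<longrightarrow> emeasure lebesgue ((E s - E (s+\<nu>)) \<union> (E (s+\<nu>) - E s)) < c"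
proof -
  have [measurable]: "f \<in> borel_measurable lebesgue" using int by auto
  define S where "S n = {x. \<bar>f x - s\<bar> < 1 / real (Suc n) \<and> \<bar>s\<bar>/2 \<le> \<bar>f x\<bar>}" for n
  have Sm': "S n \<in> sets lebesgue" for n
  proof -
    have "S n = {x\<in>space lebesgue. \<bar>f x - s\<bar> < 1 / real (Suc n) \<and> \<bar>s\<bar>/2 \<le> \<bar>f x\<bar>}"
      unfolding S_def by simp
    also have "\<dots> \<in> sets lebesgue" by measurable
    finally show ?thesis .
  qed
  then have Sm: "range S \<subseteq> sets lebesgue" by auto
  have Sd: "decseq S" unfolding S_def
  proof (rule decseq_SucI, safe)
    fix n x assume "\<bar>f x - s\<bar> < 1 / real (Suc (Suc n))"
    moreover have "1 / real (Suc (Suc n)) \<le> 1 / real (Suc n)" by (simp add: frac_le)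
    ultimately show "\<bar>f x - s\<bar> < 1 / real (Suc n)" by linarith
  qed
  have fin0: "emeasure lebesgue {x. \<bar>s\<bar>/2 \<le> \<bar>f x\<bar>} < \<infinity>" using markov_finite[OF int, of "\<bar>s\<bar>/2"] s by simp
  have Tm: "{x. \<bar>s\<bar>/2 \<le> \<bar>f x\<bar>} \<in> sets lebesgue"
  proof -
    have "{x. \<bar>s\<bar>/2 \<le> \<bar>f x\<bar>} = {x\<in>space lebesgue. \<bar>s\<bar>/2 \<le> \<bar>f x\<bar>}" by simp
    also have "\<dots> \<in> sets lebesgue" by measurable
    finally show ?thesis .
  qed
  have Sf: "emeasure lebesgue (S n) \<noteq> \<infinity>" for n
  proof -
    have "emeasure lebesgue (S n) \<le> emeasure lebesgue {x. \<bar>s\<bar>/2 \<le> \<bar>f x\<bar>}"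
      using Tm unfolding S_def by (intro emeasure_mono) auto
    then show ?thesis using fin0 by (auto simp: top_unique)
  qed
  have SI: "(\<Inter>n. S n) = {x. f x = s}"
  proof (intro equalityI subsetI)
    fix x assume x: "x \<in> (\<Inter>n. S n)"
    show "x \<in> {x. f x = s}"
    proof (rule ccontr)
      assume "x \<notin> {x. f x = s}"
      then have "\<bar>f x - s\<bar> > 0" by simp
      then obtain n where "1 / real (Suc n) < \<bar>f x - s\<bar>"
        using reals_Archimedean[of "\<bar>f x - s\<bar>"] by (auto simp: inverse_eq_divide)
      moreover have "x \<in> S n" using x by blast
      ultimately show False unfolding S_def by simp
    qed
  next
    fix x assume "x \<in> {x. f x = s}"
    then show "x \<in> (\<Inter>n. S n)" unfolding S_def by auto
  qed
  have "(\<lambda>n. emeasure lebesgue (S n)) \<longlonglongrightarrow> 0"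
    using Lim_emeasure_decseq[OF Sm Sd Sf] unfolding SI z .
  then have "eventually (\<lambda>n. emeasure lebesgue (S n) < c) sequentially"
    using c by (rule order_tendstoD(2))
  then obtain N where N: "emeasure lebesgue (S N) < c" by (auto simp: eventually_sequentially)
  define \<eta> where "\<eta> = min (1 / real (Suc N)) (\<bar>s\<bar>/2)"
  have eta: "\<eta> > 0" unfolding \<eta>_def using s by simp
  have "\<forall>\<nu>. \<bar>\<nu>\<bar> < \<eta> \<longrightarrow> emeasure lebesgue ((E s - E (s+\<nu>)) \<union> (E (s+\<nu>) - E s)) < c"
  proof (intro allI impI)
    fix \<nu> :: real assume nu: "\<bar>\<nu>\<bar> < \<eta>"
    have nu1: "\<bar>\<nu>\<bar> < 1 / real (Suc N)" "\<bar>\<nu>\<bar> < \<bar>s\<bar>/2" using nu unfolding \<eta>_def by auto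
    have "(E s - E (s+\<nu>)) \<union> (E (s+\<nu>) - E s) \<subseteq> S N"
    proof
      fix x assume x: "x \<in> (E s - E (s+\<nu>)) \<union> (E (s+\<nu>) - E s)"
      have "\<bar>f x - s\<bar> \<le> \<bar>\<nu>\<bar>"
      proof (cases "s > 0")
        case True
        then have "s + \<nu> > 0" using nu1 by linarith
        then show ?thesis using x True unfolding E_def by auto
      next
        case False
        then have "s + \<nu> < 0" "\<not> s + \<nu> > 0" using nu1 s by linarith+
        then show ?thesis using x False unfolding E_def by auto
      qed
      then show "x \<in> S N" unfolding S_def using nu1 by auto
    qed
    then have "emeasure lebesgue ((E s - E (s+\<nu>)) \<union> (E (s+\<nu>) - E s)) \<le> emeasure lebesgue (S N)"
      using Sm by (intro emeasure_mono) auto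
    then show "emeasure lebesgue ((E s - E (s+\<nu>)) \<union> (E (s+\<nu>) - E s)) < c" using N by simp
  qed
  then show ?thesis using eta by blast
qed




lemma atoms_countable:
  fixes f :: "'a::euclidean_space \<Rightarrow> real"
  assumes int: "integrable lebesgue f"
  shows "countable {s. s \<noteq> 0 \<and> emeasure lebesgue {x. f x = s} \<noteq> 0}"
proof -
  have fm[measurable]: "f \<in> borel_measurable lebesgue" using int by auto
  define D where "D = density lebesgue (\<lambda>x. ennreal \<bar>f x\<bar>)"
  define M where "M = distr D borel f"
  have fD: "f \<in> measurable D borel" unfolding D_def by simp
  have eM: "emeasure M A = emeasure D (f -` A)" if "A \<in> sets borel" for A
    unfolding M_def using emeasure_distr[OF fD that] by (simp add: D_def)
  have eD: "emeasure D B = (\<integral>\<^sup>+ x. ennreal \<bar>f x\<bar> * indicator B x \<partial>lebesgue)" if "B \<in> sets lebesgue" for B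
    unfolding D_def using that by (simp add: emeasure_density)
  have "(\<integral>\<^sup>+ x. ennreal (norm (f x)) \<partial>lebesgue) < \<infinity>" using int by (simp add: integrable_iff_bounded)
  then have "emeasure M (space M) \<noteq> \<infinity>"
    using eM[of UNIV] eD[of UNIV] by (simp add: M_def)
  then interpret finite_measure M by (rule finite_measureI)
  have "{s. s \<noteq> 0 \<and> emeasure lebesgue {x. f x = s} \<noteq> 0} \<subseteq> {s. measure M {s} \<noteq> 0}"
  proof safe
    fix s assume s: "s \<noteq> 0" "emeasure lebesgue {x. f x = s} \<noteq> 0" "measure M {s} = 0"
    have fs: "{x. f x = s} \<in> sets lebesgue"
    proof -
      have "{x. f x = s} = {x\<in>space lebesgue. f x = s}" by simp
      also have "\<dots> \<in> sets lebesgue" by measurable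
      finally show ?thesis .
    qed
    have "emeasure M {s} = emeasure D {x. f x = s}" using eM[of "{s}"] by (simp add: vimage_def)
    also have "\<dots> = (\<integral>\<^sup>+ x. ennreal \<bar>s\<bar> * indicator {x. f x = s} x \<partial>lebesgue)"
      unfolding eD[OF fs] by (intro nn_integral_cong) (auto split: split_indicator)
    also have "\<dots> = ennreal \<bar>s\<bar> * emeasure lebesgue {x. f x = s}"
      using fs by (simp add: nn_integral_cmult_indicator)
    finally have "emeasure M {s} \<noteq> 0" using s by simp
    moreover have "emeasure M {s} = 0" using s(3) emeasure_eq_measure[of "{s}"] by simp
    ultimately show False by simp
  qed
  moreover have "countable {s. measure M {s} \<noteq> 0}" by (rule countable_support)
  ultimately show ?thesis by (rule countable_subset)
qed




lemma tendsto_ereal_0: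
  fixes g :: "real \<Rightarrow> ereal"
  assumes nn: "\<And>x. 0 \<le> g x" and ev: "\<And>\<delta>. \<delta> > 0 \<Longrightarrow> eventually (\<lambda>x. g x \<le> ereal \<delta>) F"
  shows "(g \<longlongrightarrow> 0) F"
proof (rule order_tendstoI)
  fix a :: ereal assume "a < 0"
  then have "\<forall>x. a < g x" using nn by (meson less_le_trans)
  then show "eventually (\<lambda>x. a < g x) F" by (rule always_eventually)
next
  fix a :: ereal assume "0 < a"
  then obtain z where z: "0 < ereal z" "ereal z < a" using ereal_dense2 by blast
  then have "z > 0" by simp
  then show "eventually (\<lambda>x. g x < a) F"
    using ev[of z] z(2) by (auto elim: eventually_mono intro: le_less_trans)
qed


lemma ae_symdiff_eq:
  fixes A A' B B' :: "'a::euclidean_space set"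
  assumes "A \<in> sets lebesgue" "A' \<in> sets lebesgue" "B \<in> sets lebesgue" "B' \<in> sets lebesgue"
    and N1: "(A - A') \<union> (A' - A) \<in> null_sets lebesgue" and N2: "(B - B') \<union> (B' - B) \<in> null_sets lebesgue"
  shows "emeasure lebesgue ((A - B) \<union> (B - A)) = emeasure lebesgue ((A' - B') \<union> (B' - A'))"
proof (rule emeasure_eq_AE)
  have "AE x in lebesgue. x \<notin> ((A - A') \<union> (A' - A)) \<union> ((B - B') \<union> (B' - B))"
    using N1 N2 by (intro AE_not_in) auto
  then show "AE x in lebesgue. (x \<in> (A - B) \<union> (B - A)) = (x \<in> (A' - B') \<union> (B' - A'))"
    by (rule AE_mp) (intro AE_I2, blast)
qed (use assms in auto)




theorem proposition5p8:
  fixes f :: "'a::euclidean_space \<Rightarrow> real" and r0 C :: real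
  assumes dim: "DIM('a) \<ge> 2"
    and bv: "BV f"
    and supp: "\<exists>R. AE x in lebesgue. norm x > R \<longrightarrow> f x = 0"
    and r0: "r0 > 0"
    and C: "0 < C" "C < 1"
    and dens_in: "\<And>s x r. s \<noteq> 0 \<Longrightarrow> x \<in> frontier (level_set f s) \<Longrightarrow> 0 < r \<Longrightarrow> r < r0 \<Longrightarrow>
        measure lebesgue (level_set f s \<inter> ball x r) / measure lebesgue (ball x r) \<ge> C"
    and dens_out: "\<And>s x r. s \<noteq> 0 \<Longrightarrow> x \<in> frontier (level_set f s) \<Longrightarrow> 0 < r \<Longrightarrow> r \<le> r0 \<Longrightarrow>
        measure lebesgue (ball x r - level_set f s) / measure lebesgue (ball x r) \<ge> C"
  shows "AE s in lborel.
           ((\<lambda>\<nu>. hausdorff_dist (level_set f s) (level_set f (s + \<nu>))) \<longlongrightarrow> 0) (at 0) \<and>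
           ((\<lambda>\<nu>. hausdorff_dist (- level_set f s) (- level_set f (s + \<nu>))) \<longlongrightarrow> 0) (at 0)"
proof -
  have int: "integrable lebesgue f" using bv unfolding BV_def by blast
  have fm[measurable]: "f \<in> borel_measurable lebesgue" using int by auto
  have C1: "C \<le> 1" using C by simp
  define E where "E t = (if t > 0 then {x. f x > t} else {x. f x < t})" for t
  define G where "G t = level_set f t" for t
  have GE: "G t = normalized_rep (E t)" for t unfolding G_def E_def level_set_def by simp
  have Em: "E t \<in> sets lebesgue" for t
  proof -
    have "E t = {x\<in>space lebesgue. if t > 0 then f x > t else f x < t}" unfolding E_def by auto
    also have "\<dots> \<in> sets lebesgue" by measurable
    finally show ?thesis .
  qed
  have Gm: "G t \<in> sets lebesgue" for t unfolding GE using normalized_rep_ae(1)[OF Em] .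
  have GN: "(G t - E t) \<union> (E t - G t) \<in> null_sets lebesgue" for t
    unfolding GE using normalized_rep_ae(2)[OF Em] .
  have dA: "C \<le> measure lebesgue (G u \<inter> ball y r) / measure lebesgue (ball y r)"
    if "u \<noteq> 0" "y \<in> frontier (G u)" "0 < r" "r < r0" for u y r
    using dens_in[of u y r] that unfolding G_def by simp
  have dB: "C \<le> measure lebesgue (- G u \<inter> ball y r) / measure lebesgue (ball y r)"
    if "u \<noteq> 0" "y \<in> frontier (- G u)" "0 < r" "r < r0" for u y r
  proof -
    have "ball y r - G u = - G u \<inter> ball y r" by blast
    then show ?thesis using dens_out[of u y r] that unfolding G_def by (simp add: frontier_complement)
  qed
  define Bad where "Bad = insert 0 {s. s \<noteq> 0 \<and> emeasure lebesgue {x. f x = s} \<noteq> 0}"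
  have "countable Bad" unfolding Bad_def using atoms_countable[OF int] by simp
  then have "Bad \<in> null_sets lborel" by (rule countable_imp_null_set_lborel)
  then have "AE s in lborel. s \<notin> Bad" by (rule AE_not_in)
  then show ?thesis
  proof (rule AE_mp, intro AE_I2 impI)
    fix s assume "s \<notin> Bad"
    then have s: "s \<noteq> 0" and z: "emeasure lebesgue {x. f x = s} = 0" unfolding Bad_def by auto
    have key: "eventually (\<lambda>\<nu>. hausdorff_dist (G s) (G (s + \<nu>)) \<le> ereal \<delta> \<and>
                 hausdorff_dist (- G s) (- G (s + \<nu>)) \<le> ereal \<delta>) (at 0)" if d: "\<delta> > 0" for \<delta>
    proof -
      define c where "c = C * measure lebesgue (ball (0::'a) (min (\<delta>/2) (r0/2)))"
      have "c > 0" unfolding c_def using C d r0 ball_measure_pos[of "min (\<delta>/2) (r0/2)" "0::'a"] by simp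
      then have "ennreal c > 0" by simp
      from symdiff_small[OF int s z this] obtain \<eta> where eta: "\<eta> > 0"
        and small: "\<And>\<nu>. \<bar>\<nu>\<bar> < \<eta> \<Longrightarrow> emeasure lebesgue ((E s - E (s+\<nu>)) \<union> (E (s+\<nu>) - E s)) < ennreal c"
        unfolding E_def by blast
      have main: "hausdorff_dist (G s) (G (s + \<nu>)) \<le> ereal \<delta> \<and> hausdorff_dist (- G s) (- G (s + \<nu>)) \<le> ereal \<delta>"
        if nu: "\<bar>\<nu>\<bar> < min \<eta> \<bar>s\<bar>" for \<nu>
      proof -
        define t where "t = s + \<nu>"
        have t: "t \<noteq> 0" using nu unfolding t_def by auto
        have "emeasure lebesgue ((G s - G t) \<union> (G t - G s)) = emeasure lebesgue ((E s - E t) \<union> (E t - E s))"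
          using Gm Em GN by (intro ae_symdiff_eq) auto
        also have "\<dots> < ennreal c" using small[of \<nu>] nu unfolding t_def by simp
        finally have sd: "emeasure lebesgue ((G s - G t) \<union> (G t - G s)) < ennreal c" .
        have m1: "emeasure lebesgue (G s - G t) < ennreal c"
          using sd Gm by (meson emeasure_mono le_less_trans sets.Diff sets.Un sup_ge1)
        have m2: "emeasure lebesgue (G t - G s) < ennreal c"
          using sd Gm by (meson emeasure_mono le_less_trans sets.Diff sets.Un sup_ge2)
        have m3: "emeasure lebesgue (- G s - - G t) < ennreal c"
          using m2 by (simp add: Diff_eq Int_commute)
        have m4: "emeasure lebesgue (- G t - - G s) < ennreal c"
          using m1 by (simp add: Diff_eq Int_commute)
        have Gc: "- G u \<in> sets lebesgue" for u using Gm Compl_in_sets_lebesgue by blast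
        have h1: "hausdorff_dist (G s) (G t) \<le> ereal \<delta>"
        proof (rule hd_le)
          fix x assume hx: "x \<in> G s"
          show "edist_set x (G t) \<le> ereal \<delta>"
            by (rule edist_le[OF Gm Gm r0 C(1) C1 dA[OF s] d hx m1[unfolded c_def]])
        next
          fix x assume hx: "x \<in> G t"
          show "edist_set x (G s) \<le> ereal \<delta>"
            by (rule edist_le[OF Gm Gm r0 C(1) C1 dA[OF t] d hx m2[unfolded c_def]])
        qed (use d in simp)
        have h2: "hausdorff_dist (- G s) (- G t) \<le> ereal \<delta>"
        proof (rule hd_le)
          fix x assume hx: "x \<in> - G s"
          show "edist_set x (- G t) \<le> ereal \<delta>"
            by (rule edist_le[OF Gc Gc r0 C(1) C1 dB[OF s] d hx m3[unfolded c_def]])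
        next
          fix x assume hx: "x \<in> - G t"
          show "edist_set x (- G s) \<le> ereal \<delta>"
            by (rule edist_le[OF Gc Gc r0 C(1) C1 dB[OF t] d hx m4[unfolded c_def]])
        qed (use d in simp)
        show ?thesis using h1 h2 unfolding t_def by simp
      qed
      have pos: "min \<eta> \<bar>s\<bar> > 0" using eta s by simp
      have "\<forall>\<nu>. \<nu> \<noteq> 0 \<and> dist \<nu> 0 < min \<eta> \<bar>s\<bar> \<longrightarrow>
          hausdorff_dist (G s) (G (s + \<nu>)) \<le> ereal \<delta> \<and> hausdorff_dist (- G s) (- G (s + \<nu>)) \<le> ereal \<delta>"
        using main by (simp add: dist_real_def)
      then show ?thesis unfolding eventually_at using pos by blast
    qed
    show "((\<lambda>\<nu>. hausdorff_dist (level_set f s) (level_set f (s + \<nu>))) \<longlongrightarrow> 0) (at 0) \<and>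
           ((\<lambda>\<nu>. hausdorff_dist (- level_set f s) (- level_set f (s + \<nu>))) \<longlongrightarrow> 0) (at 0)"
      unfolding G_def[symmetric]
    proof
      show "((\<lambda>\<nu>. hausdorff_dist (G s) (G (s + \<nu>))) \<longlongrightarrow> 0) (at 0)"
      proof (rule tendsto_ereal_0[OF hd_nonneg])
        fix \<delta> :: real assume "\<delta> > 0"
        from key[OF this] show "eventually (\<lambda>\<nu>. hausdorff_dist (G s) (G (s + \<nu>)) \<le> ereal \<delta>) (at 0)"
          by (rule eventually_mono) simp
      qed
      show "((\<lambda>\<nu>. hausdorff_dist (- G s) (- G (s + \<nu>))) \<longlongrightarrow> 0) (at 0)"
      proof (rule tendsto_ereal_0[OF hd_nonneg])
        fix \<delta> :: real assume "\<delta> > 0"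
        from key[OF this] show "eventually (\<lambda>\<nu>. hausdorff_dist (- G s) (- G (s + \<nu>)) \<le> ereal \<delta>) (at 0)"
          by (rule eventually_mono) simp
      qed
    qed
  qed
qed


end
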